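(* Let $A\in\mathbb{R}^{m\times n}$ and $B\in\mathbb{R}^{p\times n}$ be such that the stacked matrix $Z=\begin{bmatrix}A\\ B\end{bmatrix}$ has full column rank, and let $Z=QR=\begin{bmatrix}Q_A\\ Q_B\end{bmatrix}R$ be its thin QR decomposition, with $Q\in\mathbb{R}^{(m+p)\times n}$ having orthonormal columns, $Q_A\in\mathbb{R}^{m\times n}$, $Q_B\in\mathbb{R}^{p\times n}$, and $R\in\mathbb{R}^{n\times n}$ upper triangular and nonsingular. Let $k\ge 1$ and suppose matrices $V_k\in\mathbb{R}^{n\times k}$, $U_{k+1}\in\mathbb{R}^{m\times(k+1)}$, $\widehat U_k\in\mathbb{R}^{p\times k}$, a unit vector $v_{k+1}\in\mathbb{R}^n$, scalars $\alpha_{k+1},\check\beta_k\in\mathbb{R}$, and matrices $J_k\in\mathbb{R}^{(k+1)\times k}$, $\check J_k\in\mathbb{R}^{k\times k}$ satisfy $$Q_AV_k=U_{k+1}J_k,\quad Q_A^TU_{k+1}=V_kJ_k^T+\alpha_{k+1}v_{k+1}e_{k+1}^T,$$ $$Q_BV_k=\widehat U_k\check J_k,\quad Q_B^T\widehat U_k=V_k\check J_k^T+\check\beta_kv_{k+1}e_k^T,$$ where $e_j$ denotes the $j$th canonical basis vector of the appropriate dimension. Suppose further that $J_k=X_{k+1}\begin{bmatrix}C_k\\ 0\end{bmatrix}Y_k^T$ and $\check J_k=\widehat X_kS_kY_k^T$, where $X_{k+1}\in\mathbb{R}^{(k+1)\times(k+1)}$, $\widehat X_k,Y_k\in\mathbb{R}^{k\times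 k}$ are orthogonal and $C_k=\mathrm{diag}(\tilde c_1,\dots,\tilde c_k)$, $S_k=\mathrm{diag}(\tilde s_1,\dots,\tilde s_k)$ are diagonal with $\tilde c_i^2+\tilde s_i^2=1$ for all $i$. For $i=1,\dots,k$ let $x_i$, $\hat x_i$, $y_i$ be the $i$th columns of $X_{k+1}$, $\widehat X_k$, $Y_k$, and define $\tilde u_i^A=U_{k+1}x_i$, $\tilde u_i^B=\widehat U_k\hat x_i$, $\tilde g_i=R^{-1}V_ky_i$. Then for each $i=1,\dots,k$, $$\sqrt{\big\|\tilde s_i^2A^T\tilde u_i^A-\tilde c_iB^TB\tilde g_i\big\|_2^2+\big\|\tilde c_i^2B^T\tilde u_i^B-\tilde s_iA^TA\tilde g_i\big\|_2^2}\;\le\;\sqrt{\big(\alpha_{k+1}e_{k+1}^Tx_i\big)^2+\big(\check\beta_ke_k^T\hat x_i\big)^2}\;\|R\|_2 .$$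
   Context: These relations arise from the lower-upper joint Lanczos bidiagonalization of $Q_A$ and $Q_B$ (with $J_k$ lower bidiagonal and $\check J_k$ upper bidiagonal) followed by a CS decomposition of the projected pair $\{J_k,\check J_k\}$; the quadruple $(\tilde c_i/\tilde s_i,\tilde u_i^A,\tilde u_i^B,\tilde g_i)$ is an approximate generalized singular quadruple of the pair $\{A,B\}$, and the left-hand side of the inequality is the residual norm $\|r^{\mathrm{GSVD}}\|_2$ used as a convergence criterion. *)

theory Defs
  imports Complex_Main "Jordan_Normal_Form.Matrix"
begin

definition vnorm2 :: "real vec \<Rightarrow> real" where
  "vnorm2 v = sqrt (v \<bullet> v)"

definition mnorm2 :: "real mat \<Rightarrow> real" where
  "mnorm2 M = Sup {vnorm2 (M *\<^sub>v x) | x. x \<in> carrier_vec (dim_col M) \<and> vnorm2 x = 1}"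

definition outer :: "real vec \<Rightarrow> real vec \<Rightarrow> real mat" where
  "outer v w = mat (dim_vec v) (dim_vec w) (\<lambda>(i,j). v $ i * w $ j)"

definition orth_square :: "nat \<Rightarrow> real mat \<Rightarrow> bool" where
  "orth_square n X \<longleftrightarrow> X \<in> carrier_mat n n \<and> transpose_mat X * X = 1\<^sub>m n"

end

theory Submission
  imports Defs "HOL-Analysis.L2_Norm"
begin

lemma sp_nonneg: "0 \<le> (u::real vec) \<bullet> u"
  by (auto simp: scalar_prod_def intro!: sum_nonneg)

lemma vnorm2_sq: "(vnorm2 u)^2 = u \<bullet> u"
proof -
  have "0 \<le> u \<bullet> u" by (auto simp: scalar_prod_def intro!: sum_nonneg)
  then show ?thesis unfolding vnorm2_def by simp
qed

lemma vnorm2_nonneg: "0 \<le> vnorm2 u"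
  unfolding vnorm2_def using sp_nonneg by simp

lemma cs_abs:
  assumes "u \<in> carrier_vec n" "w \<in> carrier_vec n"
  shows "\<bar>u \<bullet> w\<bar> \<le> vnorm2 u * vnorm2 w"
proof -
  have "\<bar>u \<bullet> w\<bar> = \<bar>\<Sum>i\<in>{0..<n}. u $ i * w $ i\<bar>" using assms by (simp add: scalar_prod_def)
  also have "\<dots> \<le> (\<Sum>i\<in>{0..<n}. \<bar>u $ i\<bar> * \<bar>w $ i\<bar>)" by (metis (no_types, lifting) abs_mult sum.cong sum_abs)
  also have "\<dots> \<le> L2_set (\<lambda>i. u $ i) {0..<n} * L2_set (\<lambda>i. w $ i) {0..<n}" by (rule L2_set_mult_ineq)
  also have "\<dots> = vnorm2 u * vnorm2 w" using assms
    by (simp add: L2_set_def vnorm2_def scalar_prod_def power2_eq_square)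
  finally show ?thesis .
qed

lemma vnorm2_smult: "vnorm2 (a \<cdot>\<^sub>v u) = \<bar>a\<bar> * vnorm2 u"
proof -
  have "(a \<cdot>\<^sub>v u) \<bullet> (a \<cdot>\<^sub>v u) = a^2 * (u \<bullet> u)"
    by (simp add: scalar_prod_def sum_distrib_left power2_eq_square algebra_simps)
  then show ?thesis unfolding vnorm2_def by (simp add: real_sqrt_mult)
qed

lemma mnorm_bound:
  assumes R: "R \<in> carrier_mat nr nc" and x: "x \<in> carrier_vec nc"
  shows "vnorm2 (R *\<^sub>v x) \<le> mnorm2 R * vnorm2 x"
proof (cases "vnorm2 x = 0")
  case True
  have Rx: "R *\<^sub>v x \<in> carrier_vec nr" using R x by simp
  have RT: "transpose_mat R \<in> carrier_mat nc nr" using R by simp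
  have RTRx: "transpose_mat R *\<^sub>v (R *\<^sub>v x) \<in> carrier_vec nc" using RT Rx by simp
  have e: "(transpose_mat R *\<^sub>v (R *\<^sub>v x)) \<bullet> x = (R *\<^sub>v x) \<bullet> (R *\<^sub>v x)"
    by (rule transpose_vec_mult_scalar[OF R x Rx])
  have "\<bar>(transpose_mat R *\<^sub>v (R *\<^sub>v x)) \<bullet> x\<bar> \<le> vnorm2 (transpose_mat R *\<^sub>v (R *\<^sub>v x)) * vnorm2 x"
    by (rule cs_abs[OF RTRx x])
  then have "(R *\<^sub>v x) \<bullet> (R *\<^sub>v x) \<le> 0" using True e by simp
  then have "(R *\<^sub>v x) \<bullet> (R *\<^sub>v x) = 0" using sp_nonneg[of "R *\<^sub>v x"] by linarith
  then show ?thesis using True by (simp add: vnorm2_def)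
next
  case False
  define S where "S = {vnorm2 (R *\<^sub>v y) | y. y \<in> carrier_vec (dim_col R) \<and> vnorm2 y = 1}"
  define F where "F = (\<Sum>i<nr. vnorm2 (row R i))"
  have bdd: "bdd_above S"
  proof (rule bdd_aboveI)
    fix z assume "z \<in> S"
    then obtain y where y: "y \<in> carrier_vec nc" "vnorm2 y = 1" and z: "z = vnorm2 (R *\<^sub>v y)"
      using R unfolding S_def by auto
    have "(R *\<^sub>v y) \<bullet> (R *\<^sub>v y) = (\<Sum>i<nr. (row R i \<bullet> y) * (row R i \<bullet> y))"
      using R y by (simp add: scalar_prod_def lessThan_atLeast0)
    also have "\<dots> \<le> (\<Sum>i<nr. vnorm2 (row R i) * vnorm2 (row R i))"
    proof (rule sum_mono)
      fix i assume "i \<in> {..<nr}"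
      have "\<bar>row R i \<bullet> y\<bar> \<le> vnorm2 (row R i)"
        using cs_abs[of "row R i" nc y] R y by auto
      from mult_mono[OF this this vnorm2_nonneg abs_ge_zero]
      show "(row R i \<bullet> y) * (row R i \<bullet> y) \<le> vnorm2 (row R i) * vnorm2 (row R i)"
        by (simp only: abs_mult_self_eq)
    qed
    also have "\<dots> \<le> F * F" unfolding F_def
    proof -
      have "(\<Sum>i<nr. vnorm2 (row R i) * vnorm2 (row R i)) \<le> (\<Sum>i<nr. vnorm2 (row R i) * F)"
        by (rule sum_mono, rule mult_left_mono, unfold F_def,
            rule member_le_sum, auto simp: vnorm2_nonneg)
      also have "\<dots> = F * F" by (simp add: sum_distrib_right F_def)
      finally show "(\<Sum>i<nr. vnorm2 (row R i) * vnorm2 (row R i)) \<le> (\<Sum>i<nr. vnorm2 (row R i)) * (\<Sum>i<nr. vnorm2 (row R i))" by (simp add: F_def)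
    qed
    finally have "(vnorm2 (R *\<^sub>v y))^2 \<le> F^2" using vnorm2_sq[of "R *\<^sub>v y"] by (simp add: power2_eq_square)
    moreover have "0 \<le> F" unfolding F_def by (simp add: sum_nonneg vnorm2_nonneg)
    ultimately show "z \<le> F" unfolding z by (rule power2_le_imp_le)
  qed
  define t where "t = vnorm2 x"
  have t: "t > 0" unfolding t_def using False vnorm2_nonneg[of x] by (simp add: less_le)
  define y where "y = (1/t) \<cdot>\<^sub>v x"
  have y: "y \<in> carrier_vec nc" "vnorm2 y = 1" using x t by (auto simp: y_def vnorm2_smult t_def)
  have "vnorm2 (R *\<^sub>v y) \<in> S" using y R unfolding S_def by auto
  then have le: "vnorm2 (R *\<^sub>v y) \<le> mnorm2 R" using bdd unfolding mnorm2_def S_def[symmetric]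
    by (simp add: cSup_upper)
  have "R *\<^sub>v y = (1/t) \<cdot>\<^sub>v (R *\<^sub>v x)" unfolding y_def by (rule mult_mat_vec[OF R x])
  then have "vnorm2 (R *\<^sub>v y) = vnorm2 (R *\<^sub>v x) / t" using t by (simp add: vnorm2_smult)
  then show ?thesis using le t t_def by (simp add: divide_le_eq)
qed

lemma mat_unit: fixes A :: "real mat" assumes "A \<in> carrier_mat nr nc" "l < nc"
  shows "A *\<^sub>v unit_vec nc l = col A l"
  using assms by (intro eq_vecI) auto

lemma outer_mult: assumes "v \<in> carrier_vec n" "e \<in> carrier_vec q" "x \<in> carrier_vec q"
  shows "(a \<cdot>\<^sub>m outer v e) *\<^sub>v x = (a * (e \<bullet> x)) \<cdot>\<^sub>v v"
  using assms by (intro eq_vecI) (auto simp: outer_def scalar_prod_def sum_distrib_left algebra_simps)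

lemma split_QR:
  fixes A B QA QB R :: "real mat"
  assumes A: "A \<in> carrier_mat m n" and B: "B \<in> carrier_mat p n"
    and QA: "QA \<in> carrier_mat m n'" and QB: "QB \<in> carrier_mat p n'"
    and R: "R \<in> carrier_mat n' n" and QR: "A @\<^sub>r B = (QA @\<^sub>r QB) * R"
  shows "A = QA * R \<and> B = QB * R"
proof -
  have cols: "col A l = col (QA * R) l \<and> col B l = col (QB * R) l" if l: "l < n" for l
  proof -
    let ?z = "unit_vec n l"
    have z: "?z \<in> carrier_vec n" by simp
    have Rz: "R *\<^sub>v ?z \<in> carrier_vec n'" using R by simp
    have e1: "(A @\<^sub>r B) *\<^sub>v ?z = (A *\<^sub>v ?z) @\<^sub>v (B *\<^sub>v ?z)" by (rule mat_mult_append[OF A B z])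
    have e2: "((QA @\<^sub>r QB) * R) *\<^sub>v ?z = (QA @\<^sub>r QB) *\<^sub>v (R *\<^sub>v ?z)"
      by (rule assoc_mult_mat_vec[OF carrier_append_rows[OF QA QB] R z])
    have e3: "(QA @\<^sub>r QB) *\<^sub>v (R *\<^sub>v ?z) = (QA *\<^sub>v (R *\<^sub>v ?z)) @\<^sub>v (QB *\<^sub>v (R *\<^sub>v ?z))"
      by (rule mat_mult_append[OF QA QB Rz])
    have "(A *\<^sub>v ?z) @\<^sub>v (B *\<^sub>v ?z) = (A @\<^sub>r B) *\<^sub>v ?z" by (rule e1[symmetric])
    also have "\<dots> = ((QA @\<^sub>r QB) * R) *\<^sub>v ?z" by (simp only: QR)
    also note e2
    also note e3
    finally have ee: "(A *\<^sub>v ?z) @\<^sub>v (B *\<^sub>v ?z) = (QA *\<^sub>v (R *\<^sub>v ?z)) @\<^sub>v (QB *\<^sub>v (R *\<^sub>v ?z))" .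
    have c1: "A *\<^sub>v ?z \<in> carrier_vec m" using A by simp
    have c2: "QA *\<^sub>v (R *\<^sub>v ?z) \<in> carrier_vec m" using QA Rz by simp
    have eqs: "A *\<^sub>v ?z = QA *\<^sub>v (R *\<^sub>v ?z)" "B *\<^sub>v ?z = QB *\<^sub>v (R *\<^sub>v ?z)"
      using ee unfolding append_vec_eq[OF c1 c2] by auto
    have a1: "(QA * R) *\<^sub>v ?z = QA *\<^sub>v (R *\<^sub>v ?z)" by (rule assoc_mult_mat_vec[OF QA R z])
    have a2: "(QB * R) *\<^sub>v ?z = QB *\<^sub>v (R *\<^sub>v ?z)" by (rule assoc_mult_mat_vec[OF QB R z])
    have QAR: "QA * R \<in> carrier_mat m n" using QA R by simp
    have QBR: "QB * R \<in> carrier_mat p n" using QB R by simp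
    have "col A l = col (QA * R) l"
      by (simp only: mat_unit[OF A l, symmetric] mat_unit[OF QAR l, symmetric] eqs(1) a1)
    moreover have "col B l = col (QB * R) l"
      by (simp only: mat_unit[OF B l, symmetric] mat_unit[OF QBR l, symmetric] eqs(2) a2)
    ultimately show ?thesis by blast
  qed
  show ?thesis
  proof
    show "A = QA * R"
    proof (rule eq_matI)
      fix j l assume "j < dim_row (QA * R)" "l < dim_col (QA * R)"
      then have j: "j < m" and l: "l < n" using QA R by auto
      have "A $$ (j,l) = col A l $ j" using A j l by auto
      also have "\<dots> = col (QA * R) l $ j" using cols[OF l] by simp
      also have "\<dots> = (QA * R) $$ (j,l)" using QA R j l by auto
      finally show "A $$ (j,l) = (QA * R) $$ (j,l)" .
    qed (use A QA R in auto)
    show "B = QB * R"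
    proof (rule eq_matI)
      fix j l assume "j < dim_row (QB * R)" "l < dim_col (QB * R)"
      then have j: "j < p" and l: "l < n" using QB R by auto
      have "B $$ (j,l) = col B l $ j" using B j l by auto
      also have "\<dots> = col (QB * R) l $ j" using cols[OF l] by simp
      also have "\<dots> = (QB * R) $$ (j,l)" using QB R j l by auto
      finally show "B $$ (j,l) = (QB * R) $$ (j,l)" .
    qed (use B QB R in auto)
  qed
qed

lemma D_entry: fixes c :: "nat \<Rightarrow> real" assumes "j < k+1" "i < k"
  shows "(mat_diag k c @\<^sub>r 0\<^sub>m 1 k) $$ (j,i) = (if j = i then c i else 0)"
  using assms unfolding append_rows_def mat_diag_def by (cases "j < k") auto

lemma D_unit: fixes c :: "nat \<Rightarrow> real" assumes i: "i < k"
  shows "(mat_diag k c @\<^sub>r 0\<^sub>m 1 k) *\<^sub>v unit_vec k i = c i \<cdot>\<^sub>v unit_vec (k+1) i"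
  and "transpose_mat (mat_diag k c @\<^sub>r 0\<^sub>m 1 k) *\<^sub>v unit_vec (k+1) i = c i \<cdot>\<^sub>v unit_vec k i"
proof -
  have D: "mat_diag k c @\<^sub>r 0\<^sub>m 1 k \<in> carrier_mat (k+1) k" by (rule carrier_append_rows) auto
  show "(mat_diag k c @\<^sub>r 0\<^sub>m 1 k) *\<^sub>v unit_vec k i = c i \<cdot>\<^sub>v unit_vec (k+1) i"
    unfolding mat_unit[OF D i]
  proof (rule eq_vecI)
    fix j assume "j < dim_vec (c i \<cdot>\<^sub>v unit_vec (k+1) i)"
    then have j: "j < k+1" by simp
    have "col (mat_diag k c @\<^sub>r 0\<^sub>m 1 k) i $ j = (mat_diag k c @\<^sub>r 0\<^sub>m 1 k) $$ (j,i)"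
      using D j i by (metis carrier_matD index_col)
    also have "\<dots> = (if j = i then c i else 0)" by (rule D_entry[OF j i])
    finally show "col (mat_diag k c @\<^sub>r 0\<^sub>m 1 k) i $ j = (c i \<cdot>\<^sub>v unit_vec (k+1) i) $ j"
      using j i by simp
  qed (use D in simp)
  have DT: "transpose_mat (mat_diag k c @\<^sub>r 0\<^sub>m 1 k) \<in> carrier_mat k (k+1)" using D by auto
  have ik: "i < k+1" using i by simp
  show "transpose_mat (mat_diag k c @\<^sub>r 0\<^sub>m 1 k) *\<^sub>v unit_vec (k+1) i = c i \<cdot>\<^sub>v unit_vec k i"
    unfolding mat_unit[OF DT ik]
  proof (rule eq_vecI)
    fix j assume "j < dim_vec (c i \<cdot>\<^sub>v unit_vec k i)"
    then have j: "j < k" by simp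
    have "col (transpose_mat (mat_diag k c @\<^sub>r 0\<^sub>m 1 k)) i $ j = (mat_diag k c @\<^sub>r 0\<^sub>m 1 k) $$ (i,j)"
      using D j ik by (metis carrier_matD index_col index_transpose_mat)
    also have "\<dots> = (if i = j then c j else 0)" by (rule D_entry[OF ik j])
    finally show "col (transpose_mat (mat_diag k c @\<^sub>r 0\<^sub>m 1 k)) i $ j = (c i \<cdot>\<^sub>v unit_vec k i) $ j"
      using j i by auto
  qed (use DT in simp)
qed

lemma diag_unit: fixes c :: "nat \<Rightarrow> real" assumes i: "i < k"
  shows "mat_diag k c *\<^sub>v unit_vec k i = c i \<cdot>\<^sub>v unit_vec k i"
  and "transpose_mat (mat_diag k c) *\<^sub>v unit_vec k i = c i \<cdot>\<^sub>v unit_vec k i"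
proof -
  show "mat_diag k c *\<^sub>v unit_vec k i = c i \<cdot>\<^sub>v unit_vec k i"
    unfolding mat_unit[OF mat_diag_dim i]
    using i by (intro eq_vecI) (auto simp: mat_diag_def unit_vec_def)
  have DT: "transpose_mat (mat_diag k c) \<in> carrier_mat k k" by auto
  show "transpose_mat (mat_diag k c) *\<^sub>v unit_vec k i = c i \<cdot>\<^sub>v unit_vec k i"
    unfolding mat_unit[OF DT i] using i
    by (intro eq_vecI) (auto simp: mat_diag_def unit_vec_def)
qed

lemma wbound:
  assumes R: "R \<in> carrier_mat n n" and v: "v \<in> carrier_vec n" "vnorm2 v = 1"
  shows "vnorm2 (transpose_mat R *\<^sub>v v) \<le> mnorm2 R"
proof -
  define w where "w = transpose_mat R *\<^sub>v v"
  have RT: "transpose_mat R \<in> carrier_mat n n" using R by simp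
  have wc: "w \<in> carrier_vec n" unfolding w_def using RT v(1) by simp
  have Rw: "R *\<^sub>v w \<in> carrier_vec n" using R wc by simp
  have "(vnorm2 w)^2 = w \<bullet> w" by (rule vnorm2_sq)
  also have "\<dots> = v \<bullet> (R *\<^sub>v w)" unfolding w_def[symmetric]
    by (subst (1) w_def) (rule transpose_vec_mult_scalar[OF R wc v(1)])
  also have "\<dots> \<le> \<bar>v \<bullet> (R *\<^sub>v w)\<bar>" by (rule abs_ge_self)
  also have "\<dots> \<le> vnorm2 v * vnorm2 (R *\<^sub>v w)" by (rule cs_abs[OF v(1) Rw])
  also have "\<dots> = vnorm2 (R *\<^sub>v w)" using v(2) by simp
  also have "\<dots> \<le> mnorm2 R * vnorm2 w" by (rule mnorm_bound[OF R wc])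
  finally have sq: "(vnorm2 w)^2 \<le> mnorm2 R * vnorm2 w" .
  have "vnorm2 (R *\<^sub>v v) \<le> mnorm2 R * vnorm2 v" by (rule mnorm_bound[OF R v(1)])
  then have "vnorm2 (R *\<^sub>v v) \<le> mnorm2 R" using v(2) by simp
  then have m0: "0 \<le> mnorm2 R" by (rule order_trans[OF vnorm2_nonneg])
  show ?thesis
  proof (cases "vnorm2 w = 0")
    case True then show ?thesis using m0 unfolding w_def by simp
  next
    case False
    then have pos: "vnorm2 w > 0" using vnorm2_nonneg[of w] by (simp add: less_le)
    have "vnorm2 w * vnorm2 w \<le> mnorm2 R * vnorm2 w" using sq by (simp add: power2_eq_square)
    then have "vnorm2 w \<le> mnorm2 R" using pos by simp
    then show ?thesis unfolding w_def .
  qed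
qed

theorem mainTheorem1:
  fixes m n p k :: nat
    and A QA :: "real mat" and B QB :: "real mat" and R Rinv :: "real mat"
    and V U Uh J Jc X Xh Y :: "real mat"
    and v :: "real vec" and alpha beta :: real
    and c s :: "nat \<Rightarrow> real"
  assumes A: "A \<in> carrier_mat m n" and B: "B \<in> carrier_mat p n"
    and full_rank: "\<forall>x \<in> carrier_vec n. (A @\<^sub>r B) *\<^sub>v x = 0\<^sub>v (m + p) \<longrightarrow> x = 0\<^sub>v n"
    and QA: "QA \<in> carrier_mat m n" and QB: "QB \<in> carrier_mat p n"
    and R: "R \<in> carrier_mat n n" and R_ut: "upper_triangular R"
    and Rinv: "Rinv \<in> carrier_mat n n" "R * Rinv = 1\<^sub>m n" "Rinv * R = 1\<^sub>m n"
    and QR: "A @\<^sub>r B = (QA @\<^sub>r QB) * R"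
    and Q_orth: "transpose_mat (QA @\<^sub>r QB) * (QA @\<^sub>r QB) = 1\<^sub>m n"
    and k: "k \<ge> 1"
    and V: "V \<in> carrier_mat n k" and U: "U \<in> carrier_mat m (k+1)"
    and Uh: "Uh \<in> carrier_mat p k"
    and v: "v \<in> carrier_vec n" "vnorm2 v = 1"
    and J: "J \<in> carrier_mat (k+1) k" and Jc: "Jc \<in> carrier_mat k k"
    and rel1: "QA * V = U * J"
    and rel2: "transpose_mat QA * U = V * transpose_mat J + alpha \<cdot>\<^sub>m outer v (unit_vec (k+1) k)"
    and rel3: "QB * V = Uh * Jc"
    and rel4: "transpose_mat QB * Uh = V * transpose_mat Jc + beta \<cdot>\<^sub>m outer v (unit_vec k (k-1))"
    and X: "orth_square (k+1) X" and Xh: "orth_square k Xh" and Y: "orth_square k Y"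
    and cs: "\<forall>i<k. (c i)\<^sup>2 + (s i)\<^sup>2 = 1"
    and Jdec: "J = X * (mat_diag k c @\<^sub>r 0\<^sub>m 1 k) * transpose_mat Y"
    and Jcdec: "Jc = Xh * mat_diag k s * transpose_mat Y"
  shows "\<forall>i<k.
    (let uA = U *\<^sub>v col X i; uB = Uh *\<^sub>v col Xh i; g = Rinv *\<^sub>v (V *\<^sub>v col Y i) in
      sqrt ((vnorm2 ((s i)\<^sup>2 \<cdot>\<^sub>v (transpose_mat A *\<^sub>v uA) - c i \<cdot>\<^sub>v ((transpose_mat B * B) *\<^sub>v g)))\<^sup>2
          + (vnorm2 ((c i)\<^sup>2 \<cdot>\<^sub>v (transpose_mat B *\<^sub>v uB) - s i \<cdot>\<^sub>v ((transpose_mat A * A) *\<^sub>v g)))\<^sup>2)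
      \<le> sqrt ((alpha * (unit_vec (k+1) k \<bullet> col X i))\<^sup>2 + (beta * (unit_vec k (k-1) \<bullet> col Xh i))\<^sup>2)
         * mnorm2 R)"
proof (intro allI impI)
  fix i assume i: "i < k"
  have ik1: "i < k+1" using i by simp
  define x where "x = col X i"
  define xh where "xh = col Xh i"
  define y where "y = col Y i"
  define D where "D = mat_diag k c @\<^sub>r 0\<^sub>m 1 k"
  define Sd where "Sd = mat_diag k s"
  have Xc: "X \<in> carrier_mat (k+1) (k+1)" and XX: "transpose_mat X * X = 1\<^sub>m (k+1)"
    using X unfolding orth_square_def by auto
  have Xhc: "Xh \<in> carrier_mat k k" and XhXh: "transpose_mat Xh * Xh = 1\<^sub>m k"
    using Xh unfolding orth_square_def by auto
  have Yc: "Y \<in> carrier_mat k k" and YY: "transpose_mat Y * Y = 1\<^sub>m k"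
    using Y unfolding orth_square_def by auto
  have xc: "x \<in> carrier_vec (k+1)" using Xc ik1 unfolding x_def by simp
  have xhc: "xh \<in> carrier_vec k" using Xhc i unfolding xh_def by simp
  have yc: "y \<in> carrier_vec k" using Yc i unfolding y_def by simp
  have Dc: "D \<in> carrier_mat (k+1) k" unfolding D_def by (rule carrier_append_rows) auto
  have Sdc: "Sd \<in> carrier_mat k k" unfolding Sd_def by simp
  have XTc: "transpose_mat X \<in> carrier_mat (k+1) (k+1)" using Xc by simp
  have XhTc: "transpose_mat Xh \<in> carrier_mat k k" using Xhc by simp
  have YTc: "transpose_mat Y \<in> carrier_mat k k" using Yc by simp
  have DTc: "transpose_mat D \<in> carrier_mat k (k+1)" using Dc by simp
  have SdTc: "transpose_mat Sd \<in> carrier_mat k k" using Sdc by simp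
  have XTx: "transpose_mat X *\<^sub>v x = unit_vec (k+1) i"
  proof -
    have "transpose_mat X *\<^sub>v x = col (transpose_mat X * X) i"
      unfolding x_def by (rule col_mult2[OF XTc Xc ik1, symmetric])
    also have "\<dots> = unit_vec (k+1) i" using XX ik1 by simp
    finally show ?thesis .
  qed
  have XhTxh: "transpose_mat Xh *\<^sub>v xh = unit_vec k i"
  proof -
    have "transpose_mat Xh *\<^sub>v xh = col (transpose_mat Xh * Xh) i"
      unfolding xh_def by (rule col_mult2[OF XhTc Xhc i, symmetric])
    also have "\<dots> = unit_vec k i" using XhXh i by simp
    finally show ?thesis .
  qed
  have YTy: "transpose_mat Y *\<^sub>v y = unit_vec k i"
  proof -
    have "transpose_mat Y *\<^sub>v y = col (transpose_mat Y * Y) i"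
      unfolding y_def by (rule col_mult2[OF YTc Yc i, symmetric])
    also have "\<dots> = unit_vec k i" using YY i by simp
    finally show ?thesis .
  qed
  have Xe: "X *\<^sub>v unit_vec (k+1) i = x" using mat_unit[OF Xc ik1] x_def by simp
  have Xhe: "Xh *\<^sub>v unit_vec k i = xh" using mat_unit[OF Xhc i] xh_def by simp
  have Ye: "Y *\<^sub>v unit_vec k i = y" using mat_unit[OF Yc i] y_def by simp
  have De: "D *\<^sub>v unit_vec k i = c i \<cdot>\<^sub>v unit_vec (k+1) i" using D_unit(1)[OF i] D_def by simp
  have DTe: "transpose_mat D *\<^sub>v unit_vec (k+1) i = c i \<cdot>\<^sub>v unit_vec k i" using D_unit(2)[OF i] D_def by simp
  have Se: "Sd *\<^sub>v unit_vec k i = s i \<cdot>\<^sub>v unit_vec k i" using diag_unit(1)[OF i] Sd_def by simp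
  have STe: "transpose_mat Sd *\<^sub>v unit_vec k i = s i \<cdot>\<^sub>v unit_vec k i" using diag_unit(2)[OF i] Sd_def by simp
  have XD: "X * D \<in> carrier_mat (k+1) k" using Xc Dc by simp
  have XhS: "Xh * Sd \<in> carrier_mat k k" using Xhc Sdc by simp
  have Jy: "J *\<^sub>v y = c i \<cdot>\<^sub>v x"
  proof -
    have "J *\<^sub>v y = (X * D) *\<^sub>v (transpose_mat Y *\<^sub>v y)"
      unfolding Jdec D_def[symmetric] by (rule assoc_mult_mat_vec[OF XD YTc yc])
    also have "\<dots> = X *\<^sub>v (D *\<^sub>v unit_vec k i)" unfolding YTy by (rule assoc_mult_mat_vec[OF Xc Dc]) simp
    also have "\<dots> = c i \<cdot>\<^sub>v x" unfolding De mult_mat_vec[OF Xc unit_vec_carrier] Xe ..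
    finally show ?thesis .
  qed
  have JT: "transpose_mat J = Y * (transpose_mat D * transpose_mat X)"
    unfolding Jdec D_def[symmetric] using transpose_mult[OF XD YTc] transpose_mult[OF Xc Dc] by simp
  have DTXT: "transpose_mat D * transpose_mat X \<in> carrier_mat k (k+1)" using DTc XTc by simp
  have JTx: "transpose_mat J *\<^sub>v x = c i \<cdot>\<^sub>v y"
  proof -
    have "transpose_mat J *\<^sub>v x = Y *\<^sub>v ((transpose_mat D * transpose_mat X) *\<^sub>v x)"
      unfolding JT by (rule assoc_mult_mat_vec[OF Yc DTXT xc])
    also have "\<dots> = Y *\<^sub>v (transpose_mat D *\<^sub>v unit_vec (k+1) i)"
      using assoc_mult_mat_vec[OF DTc XTc xc] XTx by simp
    also have "\<dots> = c i \<cdot>\<^sub>v y" unfolding DTe mult_mat_vec[OF Yc unit_vec_carrier] Ye ..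
    finally show ?thesis .
  qed
  have Jcy: "Jc *\<^sub>v y = s i \<cdot>\<^sub>v xh"
  proof -
    have "Jc *\<^sub>v y = (Xh * Sd) *\<^sub>v (transpose_mat Y *\<^sub>v y)"
      unfolding Jcdec Sd_def[symmetric] by (rule assoc_mult_mat_vec[OF XhS YTc yc])
    also have "\<dots> = Xh *\<^sub>v (Sd *\<^sub>v unit_vec k i)" unfolding YTy by (rule assoc_mult_mat_vec[OF Xhc Sdc]) simp
    also have "\<dots> = s i \<cdot>\<^sub>v xh" unfolding Se mult_mat_vec[OF Xhc unit_vec_carrier] Xhe ..
    finally show ?thesis .
  qed
  have JcT: "transpose_mat Jc = Y * (transpose_mat Sd * transpose_mat Xh)"
    unfolding Jcdec Sd_def[symmetric] using transpose_mult[OF XhS YTc] transpose_mult[OF Xhc Sdc] by simp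
  have STXT: "transpose_mat Sd * transpose_mat Xh \<in> carrier_mat k k" using SdTc XhTc by simp
  have JcTxh: "transpose_mat Jc *\<^sub>v xh = s i \<cdot>\<^sub>v y"
  proof -
    have "transpose_mat Jc *\<^sub>v xh = Y *\<^sub>v ((transpose_mat Sd * transpose_mat Xh) *\<^sub>v xh)"
      unfolding JcT by (rule assoc_mult_mat_vec[OF Yc STXT xhc])
    also have "\<dots> = Y *\<^sub>v (transpose_mat Sd *\<^sub>v unit_vec k i)"
      using assoc_mult_mat_vec[OF SdTc XhTc xhc] XhTxh by simp
    also have "\<dots> = s i \<cdot>\<^sub>v y" unfolding STe mult_mat_vec[OF Yc unit_vec_carrier] Ye ..
    finally show ?thesis .
  qed
  have AQ: "A = QA * R" and BQ: "B = QB * R" using split_QR[OF A B QA QB R QR] by auto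
  define Vy where "Vy = V *\<^sub>v y"
  define w where "w = transpose_mat R *\<^sub>v v"
  define z where "z = transpose_mat R *\<^sub>v Vy"
  define a where "a = unit_vec (k+1) k \<bullet> x"
  define b where "b = unit_vec k (k-1) \<bullet> xh"
  define uA where "uA = U *\<^sub>v x"
  define uB where "uB = Uh *\<^sub>v xh"
  define g where "g = Rinv *\<^sub>v Vy"
  have RT: "transpose_mat R \<in> carrier_mat n n" using R by simp
  have Vyc: "Vy \<in> carrier_vec n" unfolding Vy_def using V yc by simp
  have wc: "w \<in> carrier_vec n" unfolding w_def using RT v by simp
  have zc: "z \<in> carrier_vec n" unfolding z_def using RT Vyc by simp
  have gc: "g \<in> carrier_vec n" unfolding g_def using Rinv Vyc by simp
  have uAc: "uA \<in> carrier_vec m" unfolding uA_def using U xc by simp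
  have uBc: "uB \<in> carrier_vec p" unfolding uB_def using Uh xhc by simp
  have QARV: "QA *\<^sub>v Vy = c i \<cdot>\<^sub>v uA"
  proof -
    have "QA *\<^sub>v Vy = (QA * V) *\<^sub>v y" unfolding Vy_def using QA V yc by simp
    also have "\<dots> = U *\<^sub>v (J *\<^sub>v y)" unfolding rel1 using U J yc by simp
    also have "\<dots> = c i \<cdot>\<^sub>v uA" unfolding Jy uA_def by (rule mult_mat_vec[OF U xc])
    finally show ?thesis .
  qed
  have QBRV: "QB *\<^sub>v Vy = s i \<cdot>\<^sub>v uB"
  proof -
    have "QB *\<^sub>v Vy = (QB * V) *\<^sub>v y" unfolding Vy_def using QB V yc by simp
    also have "\<dots> = Uh *\<^sub>v (Jc *\<^sub>v y)" unfolding rel3 using Uh Jc yc by simp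
    also have "\<dots> = s i \<cdot>\<^sub>v uB" unfolding Jcy uB_def by (rule mult_mat_vec[OF Uh xhc])
    finally show ?thesis .
  qed
  have RRV: "R *\<^sub>v g = Vy"
  proof -
    have "R *\<^sub>v g = (R * Rinv) *\<^sub>v Vy" unfolding g_def by (rule assoc_mult_mat_vec[symmetric, OF R Rinv(1) Vyc])
    also have "\<dots> = Vy" unfolding Rinv(2) by (rule one_mult_mat_vec[OF Vyc])
    finally show ?thesis .
  qed
  have Ag: "A *\<^sub>v g = c i \<cdot>\<^sub>v uA" unfolding AQ using QA R gc RRV QARV by simp
  have Bg: "B *\<^sub>v g = s i \<cdot>\<^sub>v uB" unfolding BQ using QB R gc RRV QBRV by simp
  have AT: "transpose_mat A = transpose_mat R * transpose_mat QA" unfolding AQ by (rule transpose_mult[OF QA R])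
  have BT: "transpose_mat B = transpose_mat R * transpose_mat QB" unfolding BQ by (rule transpose_mult[OF QB R])
  have QAT: "transpose_mat QA \<in> carrier_mat n m" using QA by simp
  have QBT: "transpose_mat QB \<in> carrier_mat n p" using QB by simp
  have VJT: "V * transpose_mat J \<in> carrier_mat n (k+1)" using V J by simp
  have VJcT: "V * transpose_mat Jc \<in> carrier_mat n k" using V Jc by simp
  have O1: "alpha \<cdot>\<^sub>m outer v (unit_vec (k+1) k) \<in> carrier_mat n (k+1)" using v unfolding outer_def by auto
  have O2: "beta \<cdot>\<^sub>m outer v (unit_vec k (k-1)) \<in> carrier_mat n k" using v unfolding outer_def by auto
  have AtuA: "transpose_mat A *\<^sub>v uA = c i \<cdot>\<^sub>v z + (alpha * a) \<cdot>\<^sub>v w"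
  proof -
    have "transpose_mat A *\<^sub>v uA = transpose_mat R *\<^sub>v ((transpose_mat QA * U) *\<^sub>v x)"
      unfolding AT uA_def using RT QAT U xc by simp
    also have "(transpose_mat QA * U) *\<^sub>v x = (V * transpose_mat J) *\<^sub>v x + (alpha \<cdot>\<^sub>m outer v (unit_vec (k+1) k)) *\<^sub>v x"
      unfolding rel2 by (rule add_mult_distrib_mat_vec[OF VJT O1 xc])
    also have "(V * transpose_mat J) *\<^sub>v x = c i \<cdot>\<^sub>v Vy"
      using V J xc JTx mult_mat_vec[OF V yc] unfolding Vy_def by simp
    also have "(alpha \<cdot>\<^sub>m outer v (unit_vec (k+1) k)) *\<^sub>v x = (alpha * a) \<cdot>\<^sub>v v"
      unfolding a_def by (rule outer_mult[OF v(1) unit_vec_carrier xc])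
    also have "transpose_mat R *\<^sub>v (c i \<cdot>\<^sub>v Vy + (alpha * a) \<cdot>\<^sub>v v) = c i \<cdot>\<^sub>v z + (alpha * a) \<cdot>\<^sub>v w"
      unfolding z_def w_def using mult_add_distrib_mat_vec[OF RT, of "c i \<cdot>\<^sub>v Vy" "(alpha * a) \<cdot>\<^sub>v v"]
        mult_mat_vec[OF RT Vyc] mult_mat_vec[OF RT v(1)] Vyc v(1) by simp
    finally show ?thesis .
  qed
  have BtuB: "transpose_mat B *\<^sub>v uB = s i \<cdot>\<^sub>v z + (beta * b) \<cdot>\<^sub>v w"
  proof -
    have "transpose_mat B *\<^sub>v uB = transpose_mat R *\<^sub>v ((transpose_mat QB * Uh) *\<^sub>v xh)"
      unfolding BT uB_def using RT QBT Uh xhc by simp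
    also have "(transpose_mat QB * Uh) *\<^sub>v xh = (V * transpose_mat Jc) *\<^sub>v xh + (beta \<cdot>\<^sub>m outer v (unit_vec k (k-1))) *\<^sub>v xh"
      unfolding rel4 by (rule add_mult_distrib_mat_vec[OF VJcT O2 xhc])
    also have "(V * transpose_mat Jc) *\<^sub>v xh = s i \<cdot>\<^sub>v Vy"
      using V Jc xhc JcTxh mult_mat_vec[OF V yc] unfolding Vy_def by simp
    also have "(beta \<cdot>\<^sub>m outer v (unit_vec k (k-1))) *\<^sub>v xh = (beta * b) \<cdot>\<^sub>v v"
      unfolding b_def by (rule outer_mult[OF v(1) unit_vec_carrier xhc])
    also have "transpose_mat R *\<^sub>v (s i \<cdot>\<^sub>v Vy + (beta * b) \<cdot>\<^sub>v v) = s i \<cdot>\<^sub>v z + (beta * b) \<cdot>\<^sub>v w"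
      unfolding z_def w_def using mult_add_distrib_mat_vec[OF RT, of "s i \<cdot>\<^sub>v Vy" "(beta * b) \<cdot>\<^sub>v v"]
        mult_mat_vec[OF RT Vyc] mult_mat_vec[OF RT v(1)] Vyc v(1) by simp
    finally show ?thesis .
  qed
  have ATc: "transpose_mat A \<in> carrier_mat n m" using A by simp
  have BTc: "transpose_mat B \<in> carrier_mat n p" using B by simp
  have AtAg: "(transpose_mat A * A) *\<^sub>v g = c i \<cdot>\<^sub>v (transpose_mat A *\<^sub>v uA)"
    using assoc_mult_mat_vec[OF ATc A gc] Ag mult_mat_vec[OF ATc uAc] by simp
  have BtBg: "(transpose_mat B * B) *\<^sub>v g = s i \<cdot>\<^sub>v (transpose_mat B *\<^sub>v uB)"
    using assoc_mult_mat_vec[OF BTc B gc] Bg mult_mat_vec[OF BTc uBc] by simp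
  define P where "P = alpha * a"
  define Q where "Q = beta * b"
  define t where "t = s i * P - c i * Q"
  have vec1: "(s i)\<^sup>2 \<cdot>\<^sub>v (transpose_mat A *\<^sub>v uA) - c i \<cdot>\<^sub>v ((transpose_mat B * B) *\<^sub>v g)
      = (s i * t) \<cdot>\<^sub>v w"
    unfolding BtBg AtuA BtuB P_def[symmetric] Q_def[symmetric]
  proof (rule eq_vecI)
    fix j assume "j < dim_vec ((s i * t) \<cdot>\<^sub>v w)"
    then have j: "j < n" using wc by simp
    have "z $ j * ((s i)\<^sup>2 * c i) + w $ j * ((s i)\<^sup>2 * P) - (z $ j * (c i * s i * s i) + w $ j * (c i * s i * Q))
       = s i * t * w $ j" unfolding t_def power2_eq_square by (simp add: algebra_simps)
    then show "((s i)\<^sup>2 \<cdot>\<^sub>v (c i \<cdot>\<^sub>v z + P \<cdot>\<^sub>v w) - c i \<cdot>\<^sub>v (s i \<cdot>\<^sub>v (s i \<cdot>\<^sub>v z + Q \<cdot>\<^sub>v w))) $ j = ((s i * t) \<cdot>\<^sub>v w) $ j"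
      using j zc wc by (simp add: distrib_left mult.assoc mult.commute mult.left_commute)
  qed (use zc wc in simp)
  have vec2: "(c i)\<^sup>2 \<cdot>\<^sub>v (transpose_mat B *\<^sub>v uB) - s i \<cdot>\<^sub>v ((transpose_mat A * A) *\<^sub>v g)
      = (- c i * t) \<cdot>\<^sub>v w"
    unfolding AtAg AtuA BtuB P_def[symmetric] Q_def[symmetric]
  proof (rule eq_vecI)
    fix j assume "j < dim_vec ((- c i * t) \<cdot>\<^sub>v w)"
    then have j: "j < n" using wc by simp
    show "((c i)\<^sup>2 \<cdot>\<^sub>v (s i \<cdot>\<^sub>v z + Q \<cdot>\<^sub>v w) - s i \<cdot>\<^sub>v (c i \<cdot>\<^sub>v (c i \<cdot>\<^sub>v z + P \<cdot>\<^sub>v w))) $ j = ((- c i * t) \<cdot>\<^sub>v w) $ j"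
      using j zc wc unfolding t_def by (simp add: power2_eq_square) (simp add: algebra_simps)
  qed (use zc wc in simp)
  define N where "N = vnorm2 w"
  have N0: "0 \<le> N" unfolding N_def by (rule vnorm2_nonneg)
  have NR: "N \<le> mnorm2 R" unfolding N_def w_def by (rule wbound[OF R v])
  have csi: "(c i)\<^sup>2 + (s i)\<^sup>2 = 1" using cs i by simp
  have lhs: "(vnorm2 ((s i * t) \<cdot>\<^sub>v w))\<^sup>2 + (vnorm2 ((- c i * t) \<cdot>\<^sub>v w))\<^sup>2 = (\<bar>t\<bar> * N)\<^sup>2"
  proof -
    have "(vnorm2 ((s i * t) \<cdot>\<^sub>v w))\<^sup>2 + (vnorm2 ((- c i * t) \<cdot>\<^sub>v w))\<^sup>2
        = ((s i)\<^sup>2 + (c i)\<^sup>2) * (t\<^sup>2 * N\<^sup>2)"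
      unfolding vnorm2_smult N_def by (simp add: power_mult_distrib algebra_simps)
    also have "\<dots> = (\<bar>t\<bar> * N)\<^sup>2" using csi by (simp add: power_mult_distrib algebra_simps)
    finally show ?thesis .
  qed
  have tP: "\<bar>t\<bar> \<le> sqrt (P\<^sup>2 + Q\<^sup>2)"
  proof (rule real_le_rsqrt)
    have "(s i * P - c i * Q)\<^sup>2 + (s i * Q + c i * P)\<^sup>2 = ((c i)\<^sup>2 + (s i)\<^sup>2) * (P\<^sup>2 + Q\<^sup>2)"
      by (simp add: power2_eq_square algebra_simps)
    then have "t\<^sup>2 + (s i * Q + c i * P)\<^sup>2 = P\<^sup>2 + Q\<^sup>2" using csi unfolding t_def by simp
    then have "t\<^sup>2 \<le> P\<^sup>2 + Q\<^sup>2" using zero_le_power2[of "s i * Q + c i * P"] by linarith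
    then show "\<bar>t\<bar>\<^sup>2 \<le> P\<^sup>2 + Q\<^sup>2" by simp
  qed
  have "sqrt ((vnorm2 ((s i)\<^sup>2 \<cdot>\<^sub>v (transpose_mat A *\<^sub>v uA) - c i \<cdot>\<^sub>v ((transpose_mat B * B) *\<^sub>v g)))\<^sup>2
          + (vnorm2 ((c i)\<^sup>2 \<cdot>\<^sub>v (transpose_mat B *\<^sub>v uB) - s i \<cdot>\<^sub>v ((transpose_mat A * A) *\<^sub>v g)))\<^sup>2)
      = \<bar>t\<bar> * N" unfolding vec1 vec2 lhs using N0 by simp
  also have "\<dots> \<le> sqrt (P\<^sup>2 + Q\<^sup>2) * mnorm2 R"
    by (rule mult_mono[OF tP NR]) (use N0 in auto)
  finally show "let uA = U *\<^sub>v col X i; uB = Uh *\<^sub>v col Xh i; g = Rinv *\<^sub>v (V *\<^sub>v col Y i) in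
      sqrt ((vnorm2 ((s i)\<^sup>2 \<cdot>\<^sub>v (transpose_mat A *\<^sub>v uA) - c i \<cdot>\<^sub>v ((transpose_mat B * B) *\<^sub>v g)))\<^sup>2
          + (vnorm2 ((c i)\<^sup>2 \<cdot>\<^sub>v (transpose_mat B *\<^sub>v uB) - s i \<cdot>\<^sub>v ((transpose_mat A * A) *\<^sub>v g)))\<^sup>2)
      \<le> sqrt ((alpha * (unit_vec (k+1) k \<bullet> col X i))\<^sup>2 + (beta * (unit_vec k (k-1) \<bullet> col Xh i))\<^sup>2)
         * mnorm2 R"
    unfolding Let_def uA_def uB_def g_def Vy_def x_def xh_def y_def P_def Q_def a_def b_def .
qed

end
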